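(* Let $E$ be a graph and $K$ a field with involution. If $L_K(E)$ is directly finite, or if $L_K(E)$ is finite, then $E$ is no-exit.
   Context: A (directed) graph $E=(E^0,E^1,\mathbf{s},\mathbf{r})$ has vertex set $E^0$, edge set $E^1$, source and range maps; no finiteness or countability is assumed. A path is a vertex or a sequence $p=e_1\cdots e_n$ of edges with $\mathbf{r}(e_i)=\mathbf{s}(e_{i+1})$, $\mathbf{s}(p)=\mathbf{s}(e_1)$, $\mathbf{r}(p)=\mathbf{r}(e_n)$. A cycle is a path $e_1\cdots e_n$ ($n\ge1$) with $\mathbf{s}(e_1)=\mathbf{r}(e_n)$ and $\mathbf{s}(e_i)\ne\mathbf{s}(e_j)$ for $i\ne j$. $E$ is no-exit if $\mathbf{s}^{-1}(v)$ has exactly one element for every vertex $v$ lying on a cycle. A vertex $v$ is regular if $\mathbf{s}^{-1}(v)$ is nonempty and finite. $K$ has an arbitrary involution. $L_K(E)$ is the free $K$-algebra generated by $E^0\cup E^1\cup\{e^*:e\in E^1\}$ subject to (V) $vw=\delta_{v,w}v$; (E1) $\mathbf{s}(e)e=e\mathbf{r}(e)=e$; (E2) $\mathbf{r}(e)e^*=e^*\mathbf{s}(e)=e^*$; (CK1) $e^*f=\delta_{e,f}\mathbf{r}(e)$; (CK2) $v=\sum_{e\in\mathbf{s}^{-1}(v)}ee^*$ for regular $v$; it has involution $(\sum a_ip_iq_i^* )^*=\sum a_i^*q_ip_i^*$ ($p^*=e_n^*\cdots e_1^*$, $v^*=v$) and has local units (finite sums of vertices). A ring with local units is directly finite if for all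 $x,y$ and every idempotent $u$ with $xu=ux=x$, $yu=uy=y$, $xy=u$ implies $yx=u$; a $*$-ring with local units is finite if for all $x$ and every idempotent $u$ with $xu=ux=x$, $xx^*=u$ implies $x^*x=u$. *)

theory Defs
  imports Main
begin

text \<open>A graph is given by a vertex set V, an edge set Ed, and source/range maps s, r
  (no finiteness or countability).\<close>

definition is_cycle :: "'e set \<Rightarrow> ('e \<Rightarrow> 'v) \<Rightarrow> ('e \<Rightarrow> 'v) \<Rightarrow> 'e list \<Rightarrow> bool" where
  "is_cycle Ed s r c \<longleftrightarrow> c \<noteq> [] \<and> set c \<subseteq> Ed
     \<and> (\<forall>i. Suc i < length c \<longrightarrow> r (c ! i) = s (c ! Suc i))
     \<and> s (hd c) = r (last c) \<and> distinct (map s c)"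

definition no_exit :: "'v set \<Rightarrow> 'e set \<Rightarrow> ('e \<Rightarrow> 'v) \<Rightarrow> ('e \<Rightarrow> 'v) \<Rightarrow> bool" where
  "no_exit V Ed s r \<longleftrightarrow>
     (\<forall>c v. is_cycle Ed s r c \<and> v \<in> s ` set c \<longrightarrow> (\<exists>!e. e \<in> Ed \<and> s e = v))"

definition regular_vertex :: "'e set \<Rightarrow> ('e \<Rightarrow> 'v) \<Rightarrow> 'v \<Rightarrow> bool" where
  "regular_vertex Ed s v \<longleftrightarrow> {e \<in> Ed. s e = v} \<noteq> {} \<and> finite {e \<in> Ed. s e = v}"

datatype ('v, 'e) lgen = LV 'v | LE 'e | LG 'e  (* vertex, edge e, ghost edge e^* *)

fun gstar :: "('v, 'e) lgen \<Rightarrow> ('v, 'e) lgen" where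
  "gstar (LV v) = LV v" | "gstar (LE e) = LG e" | "gstar (LG e) = LE e"

text \<open>Noncommutative polynomials: coefficient functions on words. The (unital) free algebra
  consists of the finitely supported ones; the non-unital free algebra on the generators
  consists of those with zero coefficient at the empty word.\<close>

type_synonym ('v, 'e, 'k) fpoly = "('v, 'e) lgen list \<Rightarrow> 'k"

definition fsupp :: "('v, 'e, 'k::zero) fpoly \<Rightarrow> bool" where
  "fsupp p \<longleftrightarrow> finite {w. p w \<noteq> 0}"

definition FA :: "('v, 'e, 'k::zero) fpoly set" where
  "FA = {p. fsupp p \<and> p [] = 0}"

definition fzero :: "('v, 'e, 'k::zero) fpoly" where
  "fzero = (\<lambda>w. 0)"

definition fadd :: "('v, 'e, 'k::plus) fpoly \<Rightarrow> ('v, 'e, 'k) fpoly \<Rightarrow> ('v, 'e, 'k) fpoly" where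
  "fadd p q = (\<lambda>w. p w + q w)"

definition fdiff :: "('v, 'e, 'k::minus) fpoly \<Rightarrow> ('v, 'e, 'k) fpoly \<Rightarrow> ('v, 'e, 'k) fpoly" where
  "fdiff p q = (\<lambda>w. p w - q w)"

definition fmul :: "('v, 'e, 'k::comm_semiring_1) fpoly \<Rightarrow> ('v, 'e, 'k) fpoly \<Rightarrow> ('v, 'e, 'k) fpoly" where
  "fmul p q = (\<lambda>w. \<Sum>i\<le>length w. p (take i w) * q (drop i w))"

definition mono :: "('v, 'e) lgen \<Rightarrow> ('v, 'e, 'k::{zero,one}) fpoly" where
  "mono g = (\<lambda>w. if w = [g] then 1 else 0)"

text \<open>The involution induced by an involution sigma of K:
  (sum a_i w_i)^* = sum sigma(a_i) w_i^*, where a word is starred by reversing and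
  exchanging e and e^* (vertices fixed).\<close>

definition fstar :: "('k \<Rightarrow> 'k) \<Rightarrow> ('v, 'e, 'k) fpoly \<Rightarrow> ('v, 'e, 'k) fpoly" where
  "fstar \<sigma> p = (\<lambda>w. \<sigma> (p (rev (map gstar w))))"

inductive_set lpa_rels :: "'v set \<Rightarrow> 'e set \<Rightarrow> ('e \<Rightarrow> 'v) \<Rightarrow> ('e \<Rightarrow> 'v)
    \<Rightarrow> ('v, 'e, 'k::field) fpoly set"
  for V Ed s r where
  relV: "v \<in> V \<Longrightarrow> w \<in> V \<Longrightarrow>
     fdiff (fmul (mono (LV v)) (mono (LV w))) (if v = w then mono (LV v) else fzero) \<in> lpa_rels V Ed s r"
| relE1a: "e \<in> Ed \<Longrightarrow> fdiff (fmul (mono (LV (s e))) (mono (LE e))) (mono (LE e)) \<in> lpa_rels V Ed s r"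
| relE1b: "e \<in> Ed \<Longrightarrow> fdiff (fmul (mono (LE e)) (mono (LV (r e)))) (mono (LE e)) \<in> lpa_rels V Ed s r"
| relE2a: "e \<in> Ed \<Longrightarrow> fdiff (fmul (mono (LV (r e))) (mono (LG e))) (mono (LG e)) \<in> lpa_rels V Ed s r"
| relE2b: "e \<in> Ed \<Longrightarrow> fdiff (fmul (mono (LG e)) (mono (LV (s e)))) (mono (LG e)) \<in> lpa_rels V Ed s r"
| relCK1: "e \<in> Ed \<Longrightarrow> f \<in> Ed \<Longrightarrow>
     fdiff (fmul (mono (LG e)) (mono (LE f))) (if e = f then mono (LV (r e)) else fzero) \<in> lpa_rels V Ed s r"
| relCK2: "v \<in> V \<Longrightarrow> regular_vertex Ed s v \<Longrightarrow>
     fdiff (mono (LV v)) (\<lambda>w. \<Sum>e\<in>{e \<in> Ed. s e = v}. fmul (mono (LE e)) (mono (LG e)) w)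
       \<in> lpa_rels V Ed s r"

text \<open>Two-sided ideal generated by a set of relations: finite sums of terms a*rel*b,
  with a, b finitely supported (possibly containing the empty word, so that scalars,
  rel, a*rel and rel*b are all covered).\<close>

inductive_set gen_ideal :: "('v, 'e, 'k::field) fpoly set \<Rightarrow> ('v, 'e, 'k) fpoly set"
  for R where
  zero: "fzero \<in> gen_ideal R"
| gen: "x \<in> R \<Longrightarrow> fsupp a \<Longrightarrow> fsupp b \<Longrightarrow> fmul (fmul a x) b \<in> gen_ideal R"
| add: "p \<in> gen_ideal R \<Longrightarrow> q \<in> gen_ideal R \<Longrightarrow> fadd p q \<in> gen_ideal R"

text \<open>Equality in L_K(E) of (classes of) elements of the free algebra.\<close>

definition lpa_eq :: "'v set \<Rightarrow> 'e set \<Rightarrow> ('e \<Rightarrow> 'v) \<Rightarrow> ('e \<Rightarrow> 'v)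
    \<Rightarrow> ('v, 'e, 'k::field) fpoly \<Rightarrow> ('v, 'e, 'k) fpoly \<Rightarrow> bool" where
  "lpa_eq V Ed s r p q \<longleftrightarrow> fdiff p q \<in> gen_ideal (lpa_rels V Ed s r)"

definition lpa_directly_finite :: "'k::field itself \<Rightarrow> 'v set \<Rightarrow> 'e set \<Rightarrow> ('e \<Rightarrow> 'v) \<Rightarrow> ('e \<Rightarrow> 'v) \<Rightarrow> bool" where
  "lpa_directly_finite (TYPE('k)) V Ed s r \<longleftrightarrow>
     (\<forall>x y u :: ('v, 'e, 'k) fpoly. x \<in> FA \<longrightarrow> y \<in> FA \<longrightarrow> u \<in> FA \<longrightarrow>
        lpa_eq V Ed s r (fmul u u) u \<longrightarrow>
        lpa_eq V Ed s r (fmul x u) x \<longrightarrow> lpa_eq V Ed s r (fmul u x) x \<longrightarrow>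
        lpa_eq V Ed s r (fmul y u) y \<longrightarrow> lpa_eq V Ed s r (fmul u y) y \<longrightarrow>
        lpa_eq V Ed s r (fmul x y) u \<longrightarrow> lpa_eq V Ed s r (fmul y x) u)"

definition lpa_finite :: "('k::field \<Rightarrow> 'k) \<Rightarrow> 'v set \<Rightarrow> 'e set \<Rightarrow> ('e \<Rightarrow> 'v) \<Rightarrow> ('e \<Rightarrow> 'v) \<Rightarrow> bool" where
  "lpa_finite \<sigma> V Ed s r \<longleftrightarrow>
     (\<forall>x u :: ('v, 'e, 'k) fpoly. x \<in> FA \<longrightarrow> u \<in> FA \<longrightarrow>
        lpa_eq V Ed s r (fmul u u) u \<longrightarrow>
        lpa_eq V Ed s r (fmul x u) x \<longrightarrow> lpa_eq V Ed s r (fmul u x) x \<longrightarrow>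
        lpa_eq V Ed s r (fmul x (fstar \<sigma> x)) u \<longrightarrow> lpa_eq V Ed s r (fmul (fstar \<sigma> x) x) u)"

definition field_involution :: "('k::field \<Rightarrow> 'k) \<Rightarrow> bool" where
  "field_involution \<sigma> \<longleftrightarrow> (\<forall>a b. \<sigma> (a + b) = \<sigma> a + \<sigma> b) \<and> (\<forall>a b. \<sigma> (a * b) = \<sigma> a * \<sigma> b)
     \<and> (\<forall>a. \<sigma> (\<sigma> a) = a)"

end

theory Submission
  imports Defs
begin


definition W :: "('v,'e) lgen list \<Rightarrow> ('v,'e,'k::{zero,one}) fpoly" where
  "W a = (\<lambda>u. if u = a then 1 else 0)"

definition supp :: "('v,'e,'k::zero) fpoly \<Rightarrow> ('v,'e) lgen list set" where
  "supp p = {w. p w \<noteq> 0}"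

lemma mono_W: "mono g = W [g]" by (simp add: mono_def W_def)

lemma take_drop_eq: "i \<le> length w \<Longrightarrow> (take i w = a \<and> drop i w = b) \<longleftrightarrow> (w = a@b \<and> i = length a)"
  by (metis append_eq_conv_conj append_take_drop_id length_take min.absorb2)

lemma fmul_W: "fmul (W a) (W b) = (W (a@b) :: ('v,'e,'k::comm_semiring_1) fpoly)"
proof (rule ext)
  fix w :: "('v,'e) lgen list"
  have "fmul (W a) (W b) w = (\<Sum>i\<le>length w. if w = a@b \<and> i = length a then (1::'k) else 0)"
    unfolding fmul_def W_def
    by (rule sum.cong[OF refl]) (use take_drop_eq in auto)
  also have "\<dots> = W (a@b) w"
    by (cases "w = a@b") (auto simp: W_def)
  finally show "fmul (W a) (W b) w = (W (a@b) w :: 'k)" .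
qed

lemma fmul_fdiff_right: "fmul a (fdiff p q) = fdiff (fmul a p) (fmul a q :: ('v,'e,'k::comm_ring_1) fpoly)"
  unfolding fmul_def fdiff_def by (simp add: right_diff_distrib sum_subtractf)

lemma fmul_fdiff_left: "fmul (fdiff p q) a = fdiff (fmul p a) (fmul q a :: ('v,'e,'k::comm_ring_1) fpoly)"
  unfolding fmul_def fdiff_def by (simp add: left_diff_distrib sum_subtractf)

lemma fsupp_W: "fsupp (W a :: ('v,'e,'k::zero_neq_one) fpoly)"
proof -
  have "{w. (W a :: ('v,'e,'k) fpoly) w \<noteq> 0} \<subseteq> {a}" by (auto simp: W_def split: if_splits)
  then show ?thesis unfolding fsupp_def by (rule finite_subset) simp
qed

lemma step:
  fixes l m :: "('v,'e) lgen list"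
  assumes "(fdiff (W l) (W m) :: ('v,'e,'k::field) fpoly) \<in> lpa_rels V Ed s r"
    and "A = \<alpha>@l@\<beta>" and "B = \<alpha>@m@\<beta>"
  shows "lpa_eq V Ed s r (W A :: ('v,'e,'k) fpoly) (W B)"
proof -
  have "fmul (fmul (W \<alpha>) (fdiff (W l) (W m) :: ('v,'e,'k) fpoly)) (W \<beta>) \<in> gen_ideal (lpa_rels V Ed s r)"
    by (rule gen_ideal.gen[OF assms(1)]) (simp_all add: fsupp_W)
  then show ?thesis using assms(2,3)
    by (simp add: lpa_eq_def fmul_fdiff_right fmul_fdiff_left fmul_W)
qed

lemma lpa_eq_trans: "lpa_eq V Ed s r p q \<Longrightarrow> lpa_eq V Ed s r q t \<Longrightarrow> lpa_eq V Ed s r p t"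
proof -
  assume a: "lpa_eq V Ed s r p q" "lpa_eq V Ed s r q t"
  have "fdiff p t = fadd (fdiff p q) (fdiff q t)" by (simp add: fdiff_def fadd_def)
  then show ?thesis using a unfolding lpa_eq_def by (simp add: gen_ideal.add)
qed

fun chain :: "('e \<Rightarrow> 'v) \<Rightarrow> ('e \<Rightarrow> 'v) \<Rightarrow> 'e list \<Rightarrow> bool" where
  "chain s r [] = True"
| "chain s r [e] = True"
| "chain s r (e#e'#q) = (r e = s e' \<and> chain s r (e'#q))"

lemma chain_nth: "chain s r q \<longleftrightarrow> (\<forall>k. Suc k < length q \<longrightarrow> r (q!k) = s (q!Suc k))"
proof (induction s r q rule: chain.induct)
  case (3 s r e e' q)
  show ?case
    apply (simp only: chain.simps 3)
    apply (rule iffI)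
     apply (intro allI impI)
    subgoal for k by (cases k) auto
    apply (intro conjI)
     apply (drule spec[of _ 0]) apply simp
    apply (intro allI impI)
    subgoal for k by (drule spec[of _ "Suc k"]) simp
    done
qed auto

lemma rel_ck1: "e \<in> Ed \<Longrightarrow> (fdiff (W [LG e, LE e]) (W [LV (r e)]) :: ('v,'e,'k::field) fpoly) \<in> lpa_rels V Ed s r"
  using relCK1[of e Ed e] by (simp add: mono_W fmul_W)
lemma rel_e1a: "e \<in> Ed \<Longrightarrow> (fdiff (W [LV (s e), LE e]) (W [LE e]) :: ('v,'e,'k::field) fpoly) \<in> lpa_rels V Ed s r"
  using relE1a[of e Ed] by (simp add: mono_W fmul_W)
lemma rel_e1b: "e \<in> Ed \<Longrightarrow> (fdiff (W [LE e, LV (r e)]) (W [LE e]) :: ('v,'e,'k::field) fpoly) \<in> lpa_rels V Ed s r"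
  using relE1b[of e Ed] by (simp add: mono_W fmul_W)
lemma rel_e2a: "e \<in> Ed \<Longrightarrow> (fdiff (W [LV (r e), LG e]) (W [LG e]) :: ('v,'e,'k::field) fpoly) \<in> lpa_rels V Ed s r"
  using relE2a[of e Ed] by (simp add: mono_W fmul_W)
lemma rel_e2b: "e \<in> Ed \<Longrightarrow> (fdiff (W [LG e, LV (s e)]) (W [LG e]) :: ('v,'e,'k::field) fpoly) \<in> lpa_rels V Ed s r"
  using relE2b[of e Ed] by (simp add: mono_W fmul_W)
lemma rel_vv: "v \<in> V \<Longrightarrow> (fdiff (W [LV v, LV v]) (W [LV v]) :: ('v,'e,'k::field) fpoly) \<in> lpa_rels V Ed s r"
  using relV[of v V v] by (simp add: mono_W fmul_W)

lemma path_eq: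
  assumes "set (e#q) \<subseteq> Ed" "chain s r (e#q)"
  shows "lpa_eq V Ed s r (W (map LG (rev (e#q)) @ map LE (e#q)) :: ('v,'e,'k::field) fpoly) (W [LV (r (last (e#q)))])"
  using assms
proof (induction q arbitrary: e)
  case Nil
  then show ?case by (intro step[OF rel_ck1, where \<alpha>="[]" and \<beta>="[]"]) auto
next
  case (Cons e' q)
  have h1: "lpa_eq V Ed s r (W (map LG (rev (e#e'#q)) @ map LE (e#e'#q)) :: ('v,'e,'k) fpoly)
      (W (map LG (rev (e'#q)) @ [LV (r e)] @ map LE (e'#q)))"
    using Cons.prems by (intro step[OF rel_ck1[of e Ed r V s], of _ "map LG (rev (e'#q))" "map LE (e'#q)"]) auto
  have h2: "lpa_eq V Ed s r (W (map LG (rev (e'#q)) @ [LV (r e)] @ map LE (e'#q)) :: ('v,'e,'k) fpoly)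
      (W (map LG (rev (e'#q)) @ map LE (e'#q)))"
    using Cons.prems by (intro step[OF rel_e1a[of e' Ed s V r], of _ "map LG (rev (e'#q))" "map LE q"]) auto
  have h3: "lpa_eq V Ed s r (W (map LG (rev (e'#q)) @ map LE (e'#q)) :: ('v,'e,'k) fpoly)
      (W [LV (r (last (e'#q)))])"
    using Cons.prems by (intro Cons.IH) auto
  show ?case using lpa_eq_trans[OF lpa_eq_trans[OF h1 h2] h3] by simp
qed



definition psi :: "(('v,'e) lgen list \<Rightarrow> 'k) \<Rightarrow> ('v,'e,'k::comm_ring_1) fpoly \<Rightarrow> 'k" where
  "psi f p = (\<Sum>w\<in>supp p. p w * f w)"

lemma fsupp_supp: "fsupp p \<longleftrightarrow> finite (supp p)" by (simp add: fsupp_def supp_def)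

lemma psi_superset: "finite A \<Longrightarrow> supp p \<subseteq> A \<Longrightarrow> psi f p = (\<Sum>w\<in>A. p w * f w)"
  unfolding psi_def by (rule sum.mono_neutral_left) (auto simp: supp_def)

lemma supp_W: "supp (W a :: ('v,'e,'k::zero_neq_one) fpoly) = {a}"
  by (auto simp: supp_def W_def)

lemma psi_W: "psi f (W a :: ('v,'e,'k::comm_ring_1) fpoly) = f a"
  by (simp add: psi_def supp_W) (simp add: W_def)

lemma psi_fdiff:
  assumes "fsupp p" "fsupp q"
  shows "psi f (fdiff p q :: ('v,'e,'k::comm_ring_1) fpoly) = psi f p - psi f q"
proof -
  let ?A = "supp p \<union> supp q"
  have fA: "finite ?A" using assms by (simp add: fsupp_supp)
  have "psi f (fdiff p q) = (\<Sum>w\<in>?A. fdiff p q w * f w)"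
    by (rule psi_superset[OF fA]) (auto simp: supp_def fdiff_def)
  also have "\<dots> = (\<Sum>w\<in>?A. p w * f w) - (\<Sum>w\<in>?A. q w * f w)"
    by (simp add: fdiff_def left_diff_distrib sum_subtractf)
  also have "\<dots> = psi f p - psi f q"
    using psi_superset[OF fA, of p f] psi_superset[OF fA, of q f] by auto
  finally show ?thesis .
qed

lemma psi_fadd:
  assumes "fsupp p" "fsupp q"
  shows "psi f (fadd p q :: ('v,'e,'k::comm_ring_1) fpoly) = psi f p + psi f q"
proof -
  let ?A = "supp p \<union> supp q"
  have fA: "finite ?A" using assms by (simp add: fsupp_supp)
  have "psi f (fadd p q) = (\<Sum>w\<in>?A. fadd p q w * f w)"
    by (rule psi_superset[OF fA]) (auto simp: supp_def fadd_def)
  also have "\<dots> = (\<Sum>w\<in>?A. p w * f w) + (\<Sum>w\<in>?A. q w * f w)"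
    by (simp add: fadd_def distrib_right sum.distrib)
  also have "\<dots> = psi f p + psi f q"
    using psi_superset[OF fA, of p f] psi_superset[OF fA, of q f] by auto
  finally show ?thesis .
qed

lemma fsupp_fdiff: "fsupp p \<Longrightarrow> fsupp q \<Longrightarrow> fsupp (fdiff p q :: ('v,'e,'k::ab_group_add) fpoly)"
  unfolding fsupp_supp
  by (rule finite_subset[of _ "supp p \<union> supp q"]) (auto simp: supp_def fdiff_def)

lemma fsupp_fadd: "fsupp p \<Longrightarrow> fsupp q \<Longrightarrow> fsupp (fadd p q :: ('v,'e,'k::ab_group_add) fpoly)"
  unfolding fsupp_supp
  by (rule finite_subset[of _ "supp p \<union> supp q"]) (auto simp: supp_def fadd_def)

lemma psi_fzero: "psi f (fzero :: ('v,'e,'k::comm_ring_1) fpoly) = 0"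
  by (simp add: psi_def supp_def fzero_def)

lemma fsupp_fzero: "fsupp (fzero :: ('v,'e,'k::comm_ring_1) fpoly)"
  by (simp add: fsupp_def fzero_def)

lemma fsupp_sum: "finite F \<Longrightarrow> (\<forall>i\<in>F. fsupp (g i)) \<Longrightarrow> fsupp (\<lambda>w. \<Sum>i\<in>F. (g i w :: 'k::comm_ring_1))"
  unfolding fsupp_supp
  apply (rule finite_subset[of _ "\<Union>i\<in>F. supp (g i)"])
  by (auto simp: supp_def intro: sum.not_neutral_contains_not_neutral)

lemma psi_sum:
  assumes "finite F" "\<forall>i\<in>F. fsupp (g i)"
  shows "psi f (\<lambda>w. \<Sum>i\<in>F. (g i w :: 'k::comm_ring_1)) = (\<Sum>i\<in>F. psi f (g i))"
proof -
  let ?A = "\<Union>i\<in>F. supp (g i)"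
  have fA: "finite ?A" using assms by (simp add: fsupp_supp)
  have "psi f (\<lambda>w. \<Sum>i\<in>F. g i w) = (\<Sum>w\<in>?A. (\<Sum>i\<in>F. g i w) * f w)"
    apply (rule psi_superset[OF fA])
    apply (auto simp: supp_def)
    by (meson sum.not_neutral_contains_not_neutral)
  also have "\<dots> = (\<Sum>i\<in>F. \<Sum>w\<in>?A. g i w * f w)"
    by (simp add: sum_distrib_right sum.swap[of _ F])
  also have "\<dots> = (\<Sum>i\<in>F. psi f (g i))"
    by (rule sum.cong[OF refl], rule psi_superset[OF fA, symmetric]) auto
  finally show ?thesis .
qed


lemma fmul_expand:
  assumes "fsupp p" "fsupp q"
  shows "fmul p q w = (\<Sum>x\<in>supp p \<times> supp q. if fst x @ snd x = w then p (fst x) * q (snd x) else (0::'k::comm_ring_1))"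
proof -
  let ?h = "\<lambda>x. if fst x @ snd x = w then p (fst x) * q (snd x) else (0::'k)"
  let ?S = "supp p \<times> supp q"
  let ?D = "(\<lambda>i. (take i w, drop i w)) ` {..length w}"
  have fS: "finite ?S" using assms by (simp add: fsupp_supp)
  have fD: "finite ?D" by simp
  have "(\<Sum>x\<in>?S. ?h x) = (\<Sum>x\<in>?S \<union> ?D. ?h x)"
    by (rule sum.mono_neutral_left) (use fS in \<open>auto simp: supp_def\<close>)
  also have "\<dots> = (\<Sum>x\<in>?D. ?h x)"
  proof (rule sum.mono_neutral_right)
    show "\<forall>x\<in>?S \<union> ?D - ?D. ?h x = 0"
    proof
      fix x assume "x \<in> ?S \<union> ?D - ?D"
      have "fst x @ snd x \<noteq> w"
      proof
        assume e: "fst x @ snd x = w"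
        then have "x = (take (length (fst x)) w, drop (length (fst x)) w)" by (cases x) auto
        moreover have "length (fst x) \<in> {..length w}" using e by auto
        ultimately have "x \<in> ?D" by blast
        then show False using \<open>x \<in> ?S \<union> ?D - ?D\<close> by blast
      qed
      then show "?h x = 0" by simp
    qed
  qed (auto simp: fS)
  also have "\<dots> = (\<Sum>i\<le>length w. ?h (take i w, drop i w))"
  proof (rule sum.reindex[unfolded comp_def])
    show "inj_on (\<lambda>i. (take i w, drop i w)) {..length w}"
    proof (rule inj_onI)
      fix i j assume ij: "i \<in> {..length w}" "j \<in> {..length w}" "(take i w, drop i w) = (take j w, drop j w)"
      then have "length (take i w) = length (take j w)" by simp
      then show "i = j" using ij by (simp add: min_def split: if_splits)
    qed
  qed
  also have "\<dots> = fmul p q w" by (simp add: fmul_def)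
  finally show ?thesis by simp
qed



lemma supp_fmul_sub:
  assumes "fsupp p" "fsupp q"
  shows "supp (fmul p q :: ('v,'e,'k::comm_ring_1) fpoly) \<subseteq> (\<lambda>x. fst x @ snd x) ` (supp p \<times> supp q)"
proof
  fix w assume "w \<in> supp (fmul p q)"
  then have "fmul p q w \<noteq> 0" by (simp add: supp_def)
  then have "(\<Sum>x\<in>supp p \<times> supp q. if fst x @ snd x = w then p (fst x) * q (snd x) else (0::'k)) \<noteq> 0"
    by (simp add: fmul_expand[OF assms])
  then obtain x where x: "x \<in> supp p \<times> supp q" "(if fst x @ snd x = w then p (fst x) * q (snd x) else (0::'k)) \<noteq> 0"
    by (rule sum.not_neutral_contains_not_neutral)
  then have "fst x @ snd x = w" by (simp split: if_splits)
  then show "w \<in> (\<lambda>x. fst x @ snd x) ` (supp p \<times> supp q)" using x(1) by blast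
qed

lemma fsupp_fmul:
  assumes "fsupp p" "fsupp q"
  shows "fsupp (fmul p q :: ('v,'e,'k::comm_ring_1) fpoly)"
proof -
  have "finite ((\<lambda>x. fst x @ snd x) ` (supp p \<times> supp q))"
    using assms by (simp add: fsupp_supp)
  then show ?thesis unfolding fsupp_supp by (rule finite_subset[OF supp_fmul_sub[OF assms]])
qed


lemma psi_fmul:
  assumes "fsupp p" "fsupp q"
  shows "psi f (fmul p q :: ('v,'e,'k::comm_ring_1) fpoly) = (\<Sum>x\<in>supp p \<times> supp q. p (fst x) * q (snd x) * f (fst x @ snd x))"
proof -
  let ?S = "supp p \<times> supp q"
  let ?T = "(\<lambda>x. fst x @ snd x) ` ?S"
  have fS: "finite ?S" using assms by (simp add: fsupp_supp)
  have sub: "supp (fmul p q) \<subseteq> ?T" by (rule supp_fmul_sub[OF assms])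
  have "psi f (fmul p q) = (\<Sum>w\<in>?T. fmul p q w * f w)"
    by (rule psi_superset[OF _ sub]) (simp add: fS)
  also have "\<dots> = (\<Sum>w\<in>?T. \<Sum>x\<in>?S. if fst x @ snd x = w then p (fst x) * q (snd x) * f w else 0)"
    by (rule sum.cong[OF refl]) (auto simp: fmul_expand[OF assms] sum_distrib_right intro!: sum.cong)
  also have "\<dots> = (\<Sum>x\<in>?S. \<Sum>w\<in>?T. if fst x @ snd x = w then p (fst x) * q (snd x) * f w else 0)"
    by (rule sum.swap)
  also have "\<dots> = (\<Sum>x\<in>?S. p (fst x) * q (snd x) * f (fst x @ snd x))"
    by (rule sum.cong[OF refl]) (simp add: fS)
  finally show ?thesis .
qed

lemma psi_fmul_R:
  assumes "fsupp p" "fsupp q"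
  shows "psi f (fmul p q :: ('v,'e,'k::comm_ring_1) fpoly) = (\<Sum>a\<in>supp p. p a * psi (\<lambda>b. f (a @ b)) q)"
proof -
  have "(\<Sum>a\<in>supp p. p a * psi (\<lambda>b. f (a @ b)) q) = (\<Sum>x\<in>supp p \<times> supp q. p (fst x) * q (snd x) * f (fst x @ snd x))"
    by (simp add: psi_def sum_distrib_left mult.assoc sum.cartesian_product split_def)
  then show ?thesis by (simp add: psi_fmul[OF assms])
qed

lemma psi_fmul_L:
  assumes "fsupp p" "fsupp q"
  shows "psi f (fmul p q :: ('v,'e,'k::comm_ring_1) fpoly) = (\<Sum>b\<in>supp q. q b * psi (\<lambda>a. f (a @ b)) p)"
proof -
  have "(\<Sum>b\<in>supp q. q b * psi (\<lambda>a. f (a @ b)) p) = (\<Sum>a\<in>supp p. \<Sum>b\<in>supp q. p a * q b * f (a @ b))"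
    unfolding psi_def sum_distrib_left
    by (subst sum.swap) (simp add: mult.assoc mult.left_commute)
  also have "\<dots> = (\<Sum>x\<in>supp p \<times> supp q. p (fst x) * q (snd x) * f (fst x @ snd x))"
    by (simp add: sum.cartesian_product split_def)
  finally show ?thesis by (simp add: psi_fmul[OF assms])
qed



type_synonym ('v,'e) bpt = "('v \<times> 'e list) + (nat \<Rightarrow> 'e)"

fun vp :: "'e set \<Rightarrow> ('e \<Rightarrow> 'v) \<Rightarrow> ('e \<Rightarrow> 'v) \<Rightarrow> 'v \<Rightarrow> 'e list \<Rightarrow> bool" where
  "vp Ed s r v [] = (\<not> regular_vertex Ed s v)"
| "vp Ed s r v (e#q) = (e \<in> Ed \<and> s e = v \<and> vp Ed s r (r e) q)"

fun inX :: "'e set \<Rightarrow> ('e \<Rightarrow> 'v) \<Rightarrow> ('e \<Rightarrow> 'v) \<Rightarrow> ('v,'e) bpt \<Rightarrow> bool" where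
  "inX Ed s r (Inl (v,q)) = vp Ed s r v q"
| "inX Ed s r (Inr \<xi>) = (\<forall>i. \<xi> i \<in> Ed \<and> r (\<xi> i) = s (\<xi> (Suc i)))"

fun src :: "('e \<Rightarrow> 'v) \<Rightarrow> ('v,'e) bpt \<Rightarrow> 'v" where
  "src s (Inl (v,q)) = v" | "src s (Inr \<xi>) = s (\<xi> 0)"

fun hdx :: "('v,'e) bpt \<Rightarrow> 'e option" where
  "hdx (Inl (v,[])) = None" | "hdx (Inl (v,e#q)) = Some e" | "hdx (Inr \<xi>) = Some (\<xi> 0)"

fun tlx :: "('e \<Rightarrow> 'v) \<Rightarrow> ('v,'e) bpt \<Rightarrow> ('v,'e) bpt" where
  "tlx r (Inl (v,[])) = Inl (v,[])" | "tlx r (Inl (v,e#q)) = Inl (r e, q)"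
| "tlx r (Inr \<xi>) = Inr (\<lambda>i. \<xi> (Suc i))"

fun consx :: "('e \<Rightarrow> 'v) \<Rightarrow> 'e \<Rightarrow> ('v,'e) bpt \<Rightarrow> ('v,'e) bpt" where
  "consx s e (Inl (v,q)) = Inl (s e, e#q)" | "consx s e (Inr \<xi>) = Inr (case_nat e \<xi>)"

fun rho :: "'e set \<Rightarrow> ('e \<Rightarrow> 'v) \<Rightarrow> ('e \<Rightarrow> 'v) \<Rightarrow> ('v,'e) lgen \<Rightarrow> ('v,'e) bpt \<Rightarrow> ('v,'e) bpt option" where
  "rho Ed s r (LV v) x = (if src s x = v then Some x else None)"
| "rho Ed s r (LE e) x = (if e \<in> Ed \<and> src s x = r e then Some (consx s e x) else None)"
| "rho Ed s r (LG e) x = (if e \<in> Ed \<and> hdx x = Some e then Some (tlx r x) else None)"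

fun act :: "'e set \<Rightarrow> ('e \<Rightarrow> 'v) \<Rightarrow> ('e \<Rightarrow> 'v) \<Rightarrow> ('v,'e) lgen list \<Rightarrow> ('v,'e) bpt \<Rightarrow> ('v,'e) bpt option" where
  "act Ed s r [] x = Some x"
| "act Ed s r (g#w) x = Option.bind (act Ed s r w x) (rho Ed s r g)"

lemma act_append: "act Ed s r (a@b) x = Option.bind (act Ed s r b x) (act Ed s r a)"
  by (induction a) auto

lemma src_consx[simp]: "src s (consx s e x) = s e" by (cases x) auto
lemma hdx_consx[simp]: "hdx (consx s e x) = Some e" by (cases x) auto
lemma tlx_consx: "src s x = r e \<Longrightarrow> tlx r (consx s e x) = x" by (cases x) auto

lemma inX_head:
  assumes "inX Ed s r x" "hdx x = Some e"
  shows "e \<in> Ed \<and> s e = src s x \<and> src s (tlx r x) = r e \<and> consx s e (tlx r x) = x \<and> inX Ed s r (tlx r x)"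
proof (cases x)
  case (Inl a)
  then obtain v q where a: "x = Inl (v,q)" by (cases a) auto
  with assms show ?thesis by (cases q) auto
next
  case (Inr \<xi>)
  have "case_nat (\<xi> 0) (\<lambda>i. \<xi> (Suc i)) = \<xi>" by (rule ext) (simp split: nat.split)
  with assms Inr show ?thesis by auto
qed

lemma inX_none:
  assumes "inX Ed s r x" "hdx x = None"
  shows "\<not> regular_vertex Ed s (src s x)"
proof (cases x)
  case (Inl a)
  then obtain v q where a: "x = Inl (v,q)" by (cases a) auto
  with assms show ?thesis by (cases q) auto
next
  case (Inr \<xi>)
  with assms show ?thesis by auto
qed

lemma inX_cons:
  assumes "inX Ed s r x" "e \<in> Ed" "src s x = r e"
  shows "inX Ed s r (consx s e x)"
proof (cases x)
  case (Inl a)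
  then obtain v q where a: "x = Inl (v,q)" by (cases a) auto
  with assms show ?thesis by auto
next
  case (Inr \<xi>)
  with assms show ?thesis by (auto split: nat.split)
qed

lemma rho_inX: "inX Ed s r x \<Longrightarrow> rho Ed s r g x = Some y \<Longrightarrow> inX Ed s r y"
  by (cases g) (auto split: if_splits simp: inX_cons dest: inX_head)

lemma act_inX: "inX Ed s r x \<Longrightarrow> act Ed s r w x = Some y \<Longrightarrow> inX Ed s r y"
proof (induction w arbitrary: y)
  case (Cons g w)
  then show ?case by (cases "act Ed s r w x") (auto intro: rho_inX)
qed auto

definition chi :: "'e set \<Rightarrow> ('e \<Rightarrow> 'v) \<Rightarrow> ('e \<Rightarrow> 'v) \<Rightarrow> ('v,'e) bpt \<Rightarrow> ('v,'e) lgen list \<Rightarrow> 'k::{zero,one}" where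
  "chi Ed s r x0 w = (if act Ed s r w x0 = Some x0 then 1 else 0)"

lemma chi_rule:
  assumes "inX Ed s r x0" "\<And>x. inX Ed s r x \<Longrightarrow> act Ed s r l x = act Ed s r m x"
  shows "chi Ed s r x0 (\<alpha>@l@\<beta>) = chi Ed s r x0 (\<alpha>@m@\<beta>)"
proof (cases "act Ed s r \<beta> x0")
  case None
  then show ?thesis by (simp add: chi_def act_append)
next
  case (Some y)
  then have "inX Ed s r y" using act_inX assms(1) by blast
  then show ?thesis using Some assms(2)[of y] by (simp add: chi_def act_append)
qed

lemma chi_zero:
  assumes "inX Ed s r x0" "\<And>x. inX Ed s r x \<Longrightarrow> act Ed s r l x = None"
  shows "chi Ed s r x0 (\<alpha>@l@\<beta>) = 0"
proof (cases "act Ed s r \<beta> x0")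
  case None
  then show ?thesis by (simp add: chi_def act_append)
next
  case (Some y)
  then have "inX Ed s r y" using act_inX assms(1) by blast
  then show ?thesis using Some assms(2)[of y] by (simp add: chi_def act_append)
qed

lemma chi_ck2:
  assumes "inX Ed s r x0" "regular_vertex Ed s v"
  shows "(chi Ed s r x0 (\<alpha>@[LV v]@\<beta>) :: 'k::comm_ring_1) = (\<Sum>e\<in>{e \<in> Ed. s e = v}. chi Ed s r x0 (\<alpha>@[LE e, LG e]@\<beta>))"
proof (cases "act Ed s r \<beta> x0")
  case None
  then show ?thesis by (simp add: chi_def act_append)
next
  case (Some y)
  then have y: "inX Ed s r y" using act_inX assms(1) by blast
  show ?thesis
  proof (cases "src s y = v")
    case True
    then obtain e0 where e0: "hdx y = Some e0" using inX_none[OF y] assms(2) by (cases "hdx y") auto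
    note h = inX_head[OF y e0]
    have e0F: "e0 \<in> {e \<in> Ed. s e = v}" using h True by auto
    have "(\<Sum>e\<in>{e \<in> Ed. s e = v}. (chi Ed s r x0 (\<alpha>@[LE e, LG e]@\<beta>) :: 'k))
        = (\<Sum>e\<in>{e \<in> Ed. s e = v}. if e = e0 then chi Ed s r x0 (\<alpha>@[LV v]@\<beta>) else 0)"
    proof (rule sum.cong[OF refl])
      fix e assume "e \<in> {e \<in> Ed. s e = v}"
      show "(chi Ed s r x0 (\<alpha>@[LE e, LG e]@\<beta>) :: 'k) = (if e = e0 then chi Ed s r x0 (\<alpha>@[LV v]@\<beta>) else 0)"
        using Some True e0 h by (auto simp: chi_def act_append)
    qed
    also have "\<dots> = chi Ed s r x0 (\<alpha>@[LV v]@\<beta>)"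
      using e0F assms(2) by (simp add: regular_vertex_def)
    finally show ?thesis by simp
  next
    case False
    have "(\<Sum>e\<in>{e \<in> Ed. s e = v}. (chi Ed s r x0 (\<alpha>@[LE e, LG e]@\<beta>) :: 'k)) = 0"
    proof (rule sum.neutral, rule ballI)
      fix e assume e: "e \<in> {e \<in> Ed. s e = v}"
      have "hdx y \<noteq> Some e" using inX_head[OF y, of e] e False by auto
      then show "(chi Ed s r x0 (\<alpha>@[LE e, LG e]@\<beta>) :: 'k) = 0"
        using Some by (auto simp: chi_def act_append)
    qed
    then show ?thesis using Some False by (simp add: chi_def act_append)
  qed
qed



lemma fdiff_fzero: "fdiff p fzero = (p :: ('v,'e,'k::comm_ring_1) fpoly)"
  by (simp add: fdiff_def fzero_def)

lemma psi_rule: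
  assumes "inX Ed s r x0" "\<And>x. inX Ed s r x \<Longrightarrow> act Ed s r l x = act Ed s r m x"
  shows "psi (\<lambda>\<gamma>. chi Ed s r x0 (\<alpha>@\<gamma>@\<beta>)) (fdiff (W l) (W m) :: ('v,'e,'k::comm_ring_1) fpoly) = 0"
  by (simp add: psi_fdiff fsupp_W psi_W chi_rule[OF assms])

lemma psi_zero_rule:
  assumes "inX Ed s r x0" "\<And>x. inX Ed s r x \<Longrightarrow> act Ed s r l x = None"
  shows "psi (\<lambda>\<gamma>. chi Ed s r x0 (\<alpha>@\<gamma>@\<beta>)) (W l :: ('v,'e,'k::comm_ring_1) fpoly) = 0"
  by (simp add: psi_W chi_zero[OF assms])

lemma rels_psi:
  fixes x :: "('v,'e,'k::field) fpoly" and Ed :: "'e set" and s r :: "'e \<Rightarrow> 'v"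
  assumes "x \<in> lpa_rels V Ed s r" "inX Ed s r x0"
  shows "fsupp x \<and> psi (\<lambda>\<gamma>. chi Ed s r x0 (\<alpha>@\<gamma>@\<beta>)) x = (0::'k)"
  using assms(1)
proof cases
  case (relV v w)
  show ?thesis
  proof (cases "v = w")
    case True
    then show ?thesis using relV
      by (simp add: mono_W fmul_W fsupp_fdiff fsupp_W psi_rule[OF assms(2)])
  next
    case False
    have "psi (\<lambda>\<gamma>. chi Ed s r x0 (\<alpha>@\<gamma>@\<beta>)) (W [LV v, LV w] :: ('v,'e,'k) fpoly) = 0"
      by (rule psi_zero_rule[OF assms(2)]) (use False in auto)
    then show ?thesis using relV False
      by (simp add: mono_W fmul_W fdiff_fzero fsupp_W)
  qed
next
  case (relE1a e)
  then show ?thesis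
    by (simp add: mono_W fmul_W fsupp_fdiff fsupp_W psi_rule[OF assms(2)])
next
  case (relE1b e)
  then show ?thesis
    by (simp add: mono_W fmul_W fsupp_fdiff fsupp_W psi_rule[OF assms(2)])
next
  case (relE2a e)
  have "psi (\<lambda>\<gamma>. chi Ed s r x0 (\<alpha>@\<gamma>@\<beta>)) (fdiff (W [LV (r e), LG e]) (W [LG e]) :: ('v,'e,'k) fpoly) = 0"
    by (rule psi_rule[OF assms(2)]) (auto dest: inX_head)
  then show ?thesis using relE2a
    by (simp add: mono_W fmul_W fsupp_fdiff fsupp_W)
next
  case (relE2b e)
  have "psi (\<lambda>\<gamma>. chi Ed s r x0 (\<alpha>@\<gamma>@\<beta>)) (fdiff (W [LG e, LV (s e)]) (W [LG e]) :: ('v,'e,'k) fpoly) = 0"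
    by (rule psi_rule[OF assms(2)]) (auto dest: inX_head)
  then show ?thesis using relE2b
    by (simp add: mono_W fmul_W fsupp_fdiff fsupp_W)
next
  case (relCK1 e f)
  show ?thesis
  proof (cases "e = f")
    case True
    have "psi (\<lambda>\<gamma>. chi Ed s r x0 (\<alpha>@\<gamma>@\<beta>)) (fdiff (W [LG e, LE e]) (W [LV (r e)]) :: ('v,'e,'k) fpoly) = 0"
      by (rule psi_rule[OF assms(2)]) (use relCK1 in \<open>auto simp: tlx_consx\<close>)
    then show ?thesis using relCK1 True
      by (simp add: mono_W fmul_W fsupp_fdiff fsupp_W)
  next
    case False
    have "psi (\<lambda>\<gamma>. chi Ed s r x0 (\<alpha>@\<gamma>@\<beta>)) (W [LG e, LE f] :: ('v,'e,'k) fpoly) = 0"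
      by (rule psi_zero_rule[OF assms(2)]) (use False in auto)
    then show ?thesis using relCK1 False
      by (simp add: mono_W fmul_W fdiff_fzero fsupp_W)
  qed
next
  case (relCK2 v)
  let ?F = "{e \<in> Ed. s e = v}"
  have fF: "finite ?F" using relCK2 by (simp add: regular_vertex_def)
  have eq: "x = fdiff (W [LV v]) (\<lambda>w. \<Sum>e\<in>?F. (W [LE e, LG e] :: ('v,'e,'k) fpoly) w)"
    using relCK2 by (simp add: mono_W fmul_W)
  have fs: "fsupp (\<lambda>w. \<Sum>e\<in>?F. (W [LE e, LG e] :: ('v,'e,'k) fpoly) w)"
    by (rule fsupp_sum[OF fF]) (simp add: fsupp_W)
  have "psi (\<lambda>\<gamma>. chi Ed s r x0 (\<alpha>@\<gamma>@\<beta>)) x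
      = chi Ed s r x0 (\<alpha>@[LV v]@\<beta>) - (\<Sum>e\<in>?F. chi Ed s r x0 (\<alpha>@[LE e, LG e]@\<beta>))"
    unfolding eq
    by (simp add: psi_fdiff[OF fsupp_W fs] psi_W psi_sum[OF fF] fsupp_W)
  also have "\<dots> = 0" using chi_ck2[OF assms(2) relCK2(3)] by simp
  finally show ?thesis using eq fs by (simp add: fsupp_fdiff fsupp_W)
qed

lemma ideal_psi:
  fixes q :: "('v,'e,'k::field) fpoly" and Ed :: "'e set" and s r :: "'e \<Rightarrow> 'v"
  assumes "q \<in> gen_ideal (lpa_rels V Ed s r)" "inX Ed s r x0"
  shows "fsupp q \<and> psi (chi Ed s r x0) q = (0::'k)"
  using assms(1)
proof (induction rule: gen_ideal.induct)
  case zero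
  then show ?case by (simp add: fsupp_fzero psi_fzero)
next
  case (gen x a b)
  have fx: "fsupp x" using rels_psi[OF gen(1) assms(2)] by blast
  have fax: "fsupp (fmul a x)" by (rule fsupp_fmul[OF gen(2) fx])
  have "psi (chi Ed s r x0) (fmul (fmul a x) b)
      = (\<Sum>bb\<in>supp b. b bb * psi (\<lambda>c. chi Ed s r x0 (c @ bb)) (fmul a x))"
    by (rule psi_fmul_L[OF fax gen(3)])
  also have "\<dots> = (\<Sum>bb\<in>supp b. b bb * (\<Sum>aa\<in>supp a. a aa * psi (\<lambda>c. chi Ed s r x0 (aa @ c @ bb)) x))"
    by (simp add: psi_fmul_R[OF gen(2) fx])
  also have "\<dots> = 0"
    using rels_psi[OF gen(1) assms(2)] by simp
  finally show ?case using fsupp_fmul[OF fax gen(3)] by simp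
next
  case (add p q)
  then show ?case by (simp add: fsupp_fadd psi_fadd)
qed



definition nxt :: "'e set \<Rightarrow> ('e \<Rightarrow> 'v) \<Rightarrow> 'v \<Rightarrow> 'e" where
  "nxt Ed s v = (SOME e. e \<in> Ed \<and> s e = v)"

fun walk :: "'e set \<Rightarrow> ('e \<Rightarrow> 'v) \<Rightarrow> ('e \<Rightarrow> 'v) \<Rightarrow> 'v \<Rightarrow> nat \<Rightarrow> 'v" where
  "walk Ed s r v 0 = v"
| "walk Ed s r v (Suc n) = walk Ed s r (r (nxt Ed s v)) n"

lemma walk_Suc: "walk Ed s r v (Suc n) = r (nxt Ed s (walk Ed s r v n))"
  by (induction n arbitrary: v) auto

lemma reg_nxt: "regular_vertex Ed s v \<Longrightarrow> nxt Ed s v \<in> Ed \<and> s (nxt Ed s v) = v"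
  unfolding nxt_def regular_vertex_def by (rule someI_ex) blast

lemma bp_fin: "\<not> regular_vertex Ed s (walk Ed s r v n) \<Longrightarrow> \<exists>b. inX Ed s r b \<and> src s b = v"
proof (induction n arbitrary: v)
  case 0
  then show ?case by (intro exI[of _ "Inl (v,[])"]) simp
next
  case (Suc n)
  then obtain b where b: "inX Ed s r b" "src s b = r (nxt Ed s v)" by auto
  show ?case
  proof (cases "regular_vertex Ed s v")
    case True
    note h = reg_nxt[OF True]
    show ?thesis using inX_cons[OF b(1) conjunct1[OF h] b(2)] h by (intro exI[of _ "consx s (nxt Ed s v) b"]) simp
  next
    case False
    then show ?thesis by (intro exI[of _ "Inl (v,[])"]) simp
  qed
qed

lemma bp_exists:
  fixes Ed :: "'e set" and s r :: "'e \<Rightarrow> 'v"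
  shows "\<exists>b. inX Ed s r b \<and> src s b = v"
proof (cases "\<exists>n. \<not> regular_vertex Ed s (walk Ed s r v n)")
  case True
  then obtain n where "\<not> regular_vertex Ed s (walk Ed s r v n)" by blast
  then show ?thesis by (rule bp_fin)
next
  case False
  then have reg: "\<And>n. regular_vertex Ed s (walk Ed s r v n)" by blast
  let ?b = "Inr (\<lambda>n. nxt Ed s (walk Ed s r v n)) :: ('v,'e) bpt"
  have "inX Ed s r ?b" using reg_nxt[OF reg] reg_nxt[OF reg, of "Suc _"] by (simp del: walk.simps(2) add: walk_Suc)
  moreover have "src s ?b = v" using reg_nxt[OF reg[of 0]] by simp
  ultimately show ?thesis by blast
qed

lemma W_FA: "w \<noteq> [] \<Longrightarrow> (W w :: ('v,'e,'k::field) fpoly) \<in> FA"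
  by (simp add: FA_def fsupp_W) (simp add: W_def)

lemma gstar_gstar[simp]: "gstar (gstar g) = g" by (cases g) auto

lemma map_gstar_inj: "map gstar a = map gstar b \<Longrightarrow> a = b"
  by (metis (no_types, lifting) gstar_gstar map_eq_conv map_idI map_map o_apply list.map_comp)

lemma fstar_W:
  assumes "field_involution \<sigma>"
  shows "fstar \<sigma> (W (map LG (rev p))) = (W (map LE p) :: ('v,'e,'k::field) fpoly)"
proof -
  have s0: "\<sigma> 0 = 0" using assms unfolding field_involution_def by (metis add_cancel_right_right)
  have s1: "\<sigma> 1 = 1"
  proof -
    have "\<sigma> 1 = \<sigma> 1 * \<sigma> 1" using assms unfolding field_involution_def by (metis mult_1)
    then have "\<sigma> 1 = 0 \<or> \<sigma> 1 = 1" by (metis mult_cancel_right1 mult_zero_right)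
    moreover have "\<sigma> 1 \<noteq> 0"
    proof
      assume "\<sigma> 1 = 0"
      then have "\<sigma> (\<sigma> 1) = 0" using s0 by simp
      then show False using assms unfolding field_involution_def by simp
    qed
    ultimately show ?thesis by blast
  qed
  have key: "rev (map gstar w) = map LG (rev p) \<longleftrightarrow> w = map LE p" for w :: "('v,'e) lgen list"
  proof
    assume "rev (map gstar w) = map LG (rev p)"
    then have "map gstar w = map gstar (map LE p)" by (simp add: rev_map[symmetric] comp_def)
    then show "w = map LE p" by (rule map_gstar_inj)
  qed (simp add: rev_map comp_def)
  show ?thesis
    by (rule ext) (simp add: fstar_def W_def key s0 s1)
qed



lemma cycle_key:
  assumes "is_cycle Ed s r c"
  shows "r (c ! (j mod length c)) = s (c ! (Suc j mod length c))"
proof -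
  let ?n = "length c"
  have n: "?n > 0" using assms by (simp add: is_cycle_def)
  have m: "j mod ?n < ?n" using n by simp
  show ?thesis
  proof (cases "Suc (j mod ?n) = ?n")
    case True
    then have "Suc j mod ?n = 0" by (simp add: mod_Suc)
    moreover have "j mod ?n = ?n - 1" using True by linarith
    then have "c ! (j mod ?n) = last c" using n by (simp add: last_conv_nth)
    moreover have "c ! 0 = hd c" using n by (simp add: hd_conv_nth)
    ultimately show ?thesis using assms by (simp add: is_cycle_def)
  next
    case False
    then have "Suc j mod ?n = Suc (j mod ?n)" by (simp add: mod_Suc)
    moreover have "Suc (j mod ?n) < ?n" using m False by linarith
    ultimately show ?thesis using assms by (simp add: is_cycle_def)
  qed
qed

lemma rotate_path:
  assumes "is_cycle Ed s r c" "i < length c"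
  defines "p \<equiv> map (\<lambda>k. c ! ((i + k) mod length c)) [0..<length c]"
  shows "p \<noteq> [] \<and> set p \<subseteq> Ed \<and> chain s r p \<and> hd p = c ! i \<and> r (last p) = s (c ! i)"
proof -
  let ?n = "length c"
  have n: "?n > 0" using assms by (simp add: is_cycle_def)
  have ne: "p \<noteq> []" using n by (simp add: p_def)
  have sub: "set p \<subseteq> Ed"
  proof
    fix x assume "x \<in> set p"
    then obtain k where "x = c ! ((i + k) mod ?n)" by (auto simp: p_def)
    moreover have "(i + k) mod ?n < ?n" using n by simp
    ultimately show "x \<in> Ed" using assms(1) by (auto simp: is_cycle_def)
  qed
  have ch: "chain s r p"
    unfolding chain_nth
  proof (intro allI impI)
    fix k assume "Suc k < length p"
    then have "Suc k < ?n" by (simp add: p_def)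
    then show "r (p ! k) = s (p ! Suc k)"
      using cycle_key[OF assms(1), of "i + k"] by (simp add: p_def)
  qed
  have hd: "hd p = c ! i" using n assms(2) by (simp add: p_def hd_conv_nth)
  have "last p = c ! ((i + (?n - 1)) mod ?n)" using n by (simp add: p_def last_conv_nth)
  then have "r (last p) = s (c ! (Suc (i + (?n - 1)) mod ?n))"
    using cycle_key[OF assms(1), of "i + (?n - 1)"] by simp
  also have "Suc (i + (?n - 1)) = i + ?n" using n by simp
  finally have "r (last p) = s (c ! i)" using assms(2) by simp
  then show ?thesis using ne sub ch hd by blast
qed


theorem proposition4p3:
  fixes V :: "'v set" and Ed :: "'e set" and s r :: "'e \<Rightarrow> 'v" and \<sigma> :: "'k::field \<Rightarrow> 'k"
  assumes "s ` Ed \<subseteq> V" and "r ` Ed \<subseteq> V"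
    and "field_involution \<sigma>"
    and "lpa_directly_finite TYPE('k) V Ed s r \<or> lpa_finite \<sigma> V Ed s r"
  shows "no_exit V Ed s r"
proof (rule ccontr)
  assume "\<not> no_exit V Ed s r"
  then obtain c v where cyc: "is_cycle Ed s r c" and vin: "v \<in> s ` set c"
    and nu: "\<not> (\<exists>!e. e \<in> Ed \<and> s e = v)" unfolding no_exit_def by blast
  obtain i where i: "i < length c" "v = s (c ! i)" using vin by (auto simp: in_set_conv_nth)
  have ciE: "c ! i \<in> Ed" using cyc i by (auto simp: is_cycle_def)
  obtain f where f: "f \<in> Ed" "s f = v" "f \<noteq> c ! i" using nu ciE i by blast
  have vV: "v \<in> V" using assms(1) ciE i by auto
  define p where "p = map (\<lambda>k. c ! ((i + k) mod length c)) [0..<length c]"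
  have pp: "p \<noteq> [] \<and> set p \<subseteq> Ed \<and> chain s r p \<and> hd p = c ! i \<and> r (last p) = s (c ! i)"
    unfolding p_def by (rule rotate_path[OF cyc i(1)])
  then have pne: "p \<noteq> []" and pE: "set p \<subseteq> Ed" and pch: "chain s r p"
    and phd: "hd p = c ! i" and plast: "r (last p) = v" using i by auto
  define e1 where "e1 = hd p"
  define en where "en = last p"
  have e1E: "e1 \<in> Ed" using pE pne hd_in_set[OF pne] by (auto simp: e1_def)
  have enE: "en \<in> Ed" using pE pne last_in_set[OF pne] by (auto simp: en_def)
  have se1: "s e1 = v" using phd i by (simp add: e1_def)
  have ren: "r en = v" using plast by (simp add: en_def)
  have p1: "p = e1 # tl p" using pne by (simp add: e1_def)
  have p2: "p = butlast p @ [en]" using pne by (simp add: en_def)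
  define P where "P = (map LE p :: ('v,'e) lgen list)"
  define Ps where "Ps = (map LG (rev p) :: ('v,'e) lgen list)"
  define u where "u = (W [LV v] :: ('v,'e,'k) fpoly)"
  have Ps1: "Ps = map LG (rev (tl p)) @ [LG e1]" unfolding Ps_def by (subst p1) simp
  have Ps2: "Ps = [LG en] @ map LG (rev (butlast p))" unfolding Ps_def by (subst p2) simp
  have P1: "P = [LE e1] @ map LE (tl p)" unfolding P_def by (subst p1) simp
  have P2: "P = map LE (butlast p) @ [LE en]" unfolding P_def by (subst p2) simp
  have a: "lpa_eq V Ed s r (fmul u u) u"
    unfolding u_def fmul_W by (rule step[OF rel_vv[OF vV], where \<alpha>="[]" and \<beta>="[]"]) auto
  have b: "lpa_eq V Ed s r (fmul (W Ps) u) (W Ps :: ('v,'e,'k) fpoly)"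
    unfolding u_def fmul_W
    by (rule step[OF rel_e2b[OF e1E], where \<alpha>="map LG (rev (tl p))" and \<beta>="[]"]) (simp_all add: Ps1 se1)
  have c: "lpa_eq V Ed s r (fmul u (W Ps)) (W Ps :: ('v,'e,'k) fpoly)"
    unfolding u_def fmul_W
    by (rule step[OF rel_e2a[OF enE], where \<alpha>="[]" and \<beta>="map LG (rev (butlast p))"]) (simp_all add: Ps2 ren)
  have d: "lpa_eq V Ed s r (fmul (W P) u) (W P :: ('v,'e,'k) fpoly)"
    unfolding u_def fmul_W
    by (rule step[OF rel_e1b[OF enE], where \<alpha>="map LE (butlast p)" and \<beta>="[]"]) (simp_all add: P2 ren)
  have e: "lpa_eq V Ed s r (fmul u (W P)) (W P :: ('v,'e,'k) fpoly)"
    unfolding u_def fmul_W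
    by (rule step[OF rel_e1a[OF e1E], where \<alpha>="[]" and \<beta>="map LE (tl p)"]) (simp_all add: P1 se1)
  have g: "lpa_eq V Ed s r (fmul (W Ps) (W P)) u"
  proof -
    have "lpa_eq V Ed s r (W (map LG (rev (e1 # tl p)) @ map LE (e1 # tl p)) :: ('v,'e,'k) fpoly)
        (W [LV (r (last (e1 # tl p)))])"
      by (rule path_eq) (use pE pch p1 in auto)
    then show ?thesis unfolding u_def fmul_W Ps_def P_def using p1 plast by (simp add: en_def)
  qed
  obtain b0 where b0: "inX Ed s r b0" "src s b0 = r f" using bp_exists[of Ed s r "r f"] by (elim exE conjE)
  define x0 where "x0 = consx s f b0"
  have x0X: "inX Ed s r x0" unfolding x0_def by (rule inX_cons[OF b0(1) f(1) b0(2)])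
  have chi1: "(chi Ed s r x0 [LV v] :: 'k) = 1" using f by (simp add: chi_def x0_def)
  have chi0: "(chi Ed s r x0 (P @ Ps) :: 'k) = 0"
  proof -
    have "act Ed s r [LG e1] x0 = None" using f phd by (simp add: x0_def e1_def)
    then have "act Ed s r Ps x0 = None" unfolding Ps1 by (simp add: act_append)
    then show ?thesis by (simp add: chi_def act_append)
  qed
  have neg: "\<not> lpa_eq V Ed s r (W (P @ Ps)) u"
  proof
    assume "lpa_eq V Ed s r (W (P @ Ps)) u"
    then have "fdiff (W (P @ Ps)) u \<in> gen_ideal (lpa_rels V Ed s r)" by (simp add: lpa_eq_def)
    from ideal_psi[OF this x0X] have "psi (chi Ed s r x0) (fdiff (W (P @ Ps)) u) = 0" by blast
    then show False unfolding u_def by (simp add: psi_fdiff fsupp_W psi_W chi0 chi1)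
  qed
  have Pne: "P \<noteq> []" and Psne: "Ps \<noteq> []" using pne by (auto simp: P_def Ps_def)
  have uFA: "u \<in> FA" unfolding u_def by (rule W_FA) simp
  from assms(4) show False
  proof
    assume df: "lpa_directly_finite TYPE('k) V Ed s r"
    have H: "\<forall>x y u :: ('v, 'e, 'k) fpoly. x \<in> FA \<longrightarrow> y \<in> FA \<longrightarrow> u \<in> FA \<longrightarrow>
        lpa_eq V Ed s r (fmul u u) u \<longrightarrow>
        lpa_eq V Ed s r (fmul x u) x \<longrightarrow> lpa_eq V Ed s r (fmul u x) x \<longrightarrow>
        lpa_eq V Ed s r (fmul y u) y \<longrightarrow> lpa_eq V Ed s r (fmul u y) y \<longrightarrow>
        lpa_eq V Ed s r (fmul x y) u \<longrightarrow> lpa_eq V Ed s r (fmul y x) u"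
      using df unfolding lpa_directly_finite_def .
    have "lpa_eq V Ed s r (fmul (W P) (W Ps)) u"
      by (rule H[rule_format, OF W_FA[OF Psne] W_FA[OF Pne] uFA a b c d e g])
    then show False using neg by (simp add: fmul_W)
  next
    assume fin: "lpa_finite \<sigma> V Ed s r"
    have H: "\<forall>x u :: ('v, 'e, 'k) fpoly. x \<in> FA \<longrightarrow> u \<in> FA \<longrightarrow>
        lpa_eq V Ed s r (fmul u u) u \<longrightarrow>
        lpa_eq V Ed s r (fmul x u) x \<longrightarrow> lpa_eq V Ed s r (fmul u x) x \<longrightarrow>
        lpa_eq V Ed s r (fmul x (fstar \<sigma> x)) u \<longrightarrow> lpa_eq V Ed s r (fmul (fstar \<sigma> x) x) u"
      using fin unfolding lpa_finite_def .
    have fs: "fstar \<sigma> (W Ps) = (W P :: ('v,'e,'k) fpoly)"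
      unfolding Ps_def P_def by (rule fstar_W[OF assms(3)])
    have g': "lpa_eq V Ed s r (fmul (W Ps) (fstar \<sigma> (W Ps))) u" using g fs by simp
    have "lpa_eq V Ed s r (fmul (fstar \<sigma> (W Ps)) (W Ps)) u"
      by (rule H[rule_format, OF W_FA[OF Psne] uFA a b c g'])
    then show False using neg fs by (simp add: fmul_W)
  qed
qed



end
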